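(* The function $\overrightarrow{\mathrm{AC}}$ does not satisfy the triangle inequality: there exist languages $X,Y,Z$ over a finite alphabet with $\overrightarrow{\mathrm{AC}}(X,Z)>\overrightarrow{\mathrm{AC}}(X,Y)+\overrightarrow{\mathrm{AC}}(Y,Z)$.
   Context: For words $x,y$, $\mathrm{ed}(x,y)$ is the Levenshtein edit distance (minimum number of single-letter insertions, deletions and substitutions transforming $x$ into $y$). For languages $X,Y$, \[ \overrightarrow{\mathrm{AC}}(X,Y)=\lim_{n\to\infty}\ \sup_{x\in X,\ |x|\ge n}\ \inf_{y\in Y}\frac{\mathrm{ed}(x,y)}{|x|}. \] *)

theory Defs
  imports Complex_Main "HOL-Library.Extended_Real"
begin

inductive edit_step :: "'a list \<Rightarrow> 'a list \<Rightarrow> bool" where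
  ins: "edit_step (u @ v) (u @ [a] @ v)"
| del: "edit_step (u @ [a] @ v) (u @ v)"
| subst: "edit_step (u @ [a] @ v) (u @ [b] @ v)"

definition ed :: "'a list \<Rightarrow> 'a list \<Rightarrow> nat" where
  "ed x y = (LEAST k. (edit_step ^^ k) x y)"

text \<open>Directed asymptotic closeness AC(X,Y), valued in the extended reals
  (sup over the empty set is -infinity, inf over the empty set is +infinity).\<close>
definition AC :: "'a list set \<Rightarrow> 'a list set \<Rightarrow> ereal" where
  "AC X Y = lim (\<lambda>n. SUP x\<in>{x\<in>X. length x \<ge> n}.
                        INF y\<in>Y. ereal (real (ed x y) / real (length x)))"

end

theory Submission
  imports Defs
begin

lemma step_len: "edit_step x y \<Longrightarrow> length y \<le> length x + 1 \<and> length x \<le> length y + 1"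
  by (induction rule: edit_step.induct) auto

lemma pow_len: "(edit_step ^^ k) x y \<Longrightarrow> length y \<le> length x + k \<and> length x \<le> length y + k"
proof (induction k arbitrary: y)
  case 0 then show ?case by simp
next
  case (Suc k)
  from Suc.prems obtain z where "(edit_step ^^ k) x z" "edit_step z y" by (rule relpowp_Suc_E)
  with Suc.IH[of z] step_len[of z y] show ?case by auto
qed

lemma pow_up: "(edit_step ^^ k) (replicate m a) (replicate (m + k) a)"
proof (induction k)
  case 0 then show ?case by simp
next
  case (Suc k)
  have "edit_step ([] @ replicate (m+k) a) ([] @ [a] @ replicate (m+k) a)" by (rule edit_step.ins)
  then have "edit_step (replicate (m+k) a) (replicate (m + Suc k) a)" by simp
  with Suc show ?case by (rule relpowp_Suc_I)
qed

lemma pow_down: "(edit_step ^^ k) (replicate (m + k) a) (replicate m a)"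
proof (induction k)
  case 0 then show ?case by simp
next
  case (Suc k)
  have "edit_step ([] @ [a] @ replicate (m+k) a) ([] @ replicate (m+k) a)" by (rule edit_step.del)
  then have "edit_step (replicate (m + Suc k) a) (replicate (m + k) a)"
    by (simp add: replicate_append_same)
  then show ?case using Suc by (rule relpowp_Suc_I2)
qed

lemma ed_rep: "ed (replicate m a) (replicate n a) = (if m \<le> n then n - m else m - n)"
  unfolding ed_def
proof (rule Least_equality)
  show "(edit_step ^^ (if m \<le> n then n - m else m - n)) (replicate m a) (replicate n a)"
  proof (cases "m \<le> n")
    case True then show ?thesis using pow_up[of "n-m" m a] by simp
  next
    case False then show ?thesis using pow_down[of "m-n" n a] by simp
  qed
next
  fix k assume "(edit_step ^^ k) (replicate m a) (replicate n a)"
  from pow_len[OF this] show "(if m \<le> n then n - m else m - n) \<le> k" by auto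
qed

lemma INF_eq:
  fixes g :: "'b \<Rightarrow> ereal"
  assumes "yy \<in> Y" "g yy = c" "\<And>y. y \<in> Y \<Longrightarrow> c \<le> g y"
  shows "(INF y\<in>Y. g y) = c"
  by (rule antisym) (use assms in \<open>auto intro: INF_lower2 INF_greatest\<close>)

lemma AC_const:
  assumes "\<And>n. \<exists>x\<in>X. length x \<ge> n"
    and "\<And>x. x \<in> X \<Longrightarrow> (INF y\<in>Y. ereal (real (ed x y) / real (length x))) = c"
  shows "AC X Y = c"
proof -
  have "(\<lambda>n. SUP x\<in>{x\<in>X. length x \<ge> n}. INF y\<in>Y. ereal (real (ed x y) / real (length x)))
        = (\<lambda>n. c)"
  proof
    fix n
    have ne: "{x\<in>X. length x \<ge> n} \<noteq> {}" using assms(1)[of n] by auto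
    have "(SUP x\<in>{x\<in>X. length x \<ge> n}. INF y\<in>Y. ereal (real (ed x y) / real (length x)))
          = (SUP x\<in>{x\<in>X. length x \<ge> n}. c)"
      by (rule SUP_cong) (auto simp: assms(2))
    also have "\<dots> = c" using ne by simp
    finally show "(SUP x\<in>{x\<in>X. length x \<ge> n}. INF y\<in>Y. ereal (real (ed x y) / real (length x))) = c" .
  qed
  then show ?thesis unfolding AC_def by (simp add: limI)
qed

definition W :: "nat \<Rightarrow> nat list set" where
  "W c = range (\<lambda>k. replicate (c * 10 ^ k) (0::nat))"

lemma W_long: "c > 0 \<Longrightarrow> \<exists>x\<in>W c. length x \<ge> n"
proof -
  assume c: "c > 0"
  have "n < 10 ^ n" by (induction n) auto
  also have "\<dots> \<le> c * 10 ^ n" using c by simp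
  finally show ?thesis unfolding W_def by (intro bexI[of _ "replicate (c * 10 ^ n) 0"]) auto
qed

lemma W_inf: "c > 0 \<Longrightarrow> infinite (W c)"
proof
  assume c: "c > 0" and f: "finite (W c)"
  then obtain N where "\<forall>x\<in>W c. length x \<le> N"
    using finite_nat_set_iff_bounded_le[of "length ` W c"] by auto
  moreover obtain x where "x \<in> W c" "length x \<ge> Suc N" using W_long[OF c] by blast
  ultimately show False by force
qed

lemma W_lists: "W c \<subseteq> lists {0}"
  unfolding W_def by auto

lemma pw: "j \<le> k \<Longrightarrow> (10::nat) ^ j \<le> 10 ^ k" "k < j \<Longrightarrow> 10 * (10::nat) ^ k \<le> 10 ^ j"
proof -
  show "j \<le> k \<Longrightarrow> (10::nat) ^ j \<le> 10 ^ k" by (rule power_increasing) auto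
  assume "k < j"
  then have "(10::nat) ^ Suc k \<le> 10 ^ j" by (intro power_increasing) auto
  then show "10 * (10::nat) ^ k \<le> 10 ^ j" by simp
qed

lemma XZ: "x \<in> W 6 \<Longrightarrow> (INF y\<in>W 1. ereal (real (ed x y) / real (length x))) = ereal (2/3)"
proof -
  assume "x \<in> W 6"
  then obtain k where x: "x = replicate (6 * 10 ^ k) 0" unfolding W_def by auto
  show ?thesis
  proof (rule INF_eq[where yy = "replicate (1 * 10 ^ Suc k) 0"])
    show "replicate (1 * 10 ^ Suc k) 0 \<in> W 1" unfolding W_def by blast
    have "ed x (replicate (1 * 10 ^ Suc k) 0) = 4 * 10 ^ k" unfolding x ed_rep by simp
    then show "ereal (real (ed x (replicate (1 * 10 ^ Suc k) 0)) / real (length x)) = ereal (2/3)"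
      unfolding x by simp
  next
    fix y assume "y \<in> W 1"
    then obtain j where y: "y = replicate (1 * 10 ^ j) 0" unfolding W_def by auto
    have "4 * 10 ^ k \<le> ed x y"
    proof (cases "j \<le> k")
      case True
      then have "(10::nat) ^ j \<le> 10 ^ k" by (rule pw(1))
      then show ?thesis unfolding x y ed_rep by (split if_split) linarith
    next
      case False
      then have "10 * (10::nat) ^ k \<le> 10 ^ j" by (intro pw(2)) auto
      then show ?thesis unfolding x y ed_rep by (split if_split) linarith
    qed
    then have "real (4 * 10 ^ k) \<le> real (ed x y)" by linarith
    then have "2/3 \<le> real (ed x y) / real (length x)" unfolding x by (simp add: field_simps)
    then show "ereal (2/3) \<le> ereal (real (ed x y) / real (length x))" by simp
  qed
qed

lemma XY: "x \<in> W 6 \<Longrightarrow> (INF y\<in>W 8. ereal (real (ed x y) / real (length x))) = ereal (1/3)"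
proof -
  assume "x \<in> W 6"
  then obtain k where x: "x = replicate (6 * 10 ^ k) 0" unfolding W_def by auto
  show ?thesis
  proof (rule INF_eq[where yy = "replicate (8 * 10 ^ k) 0"])
    show "replicate (8 * 10 ^ k) 0 \<in> W 8" unfolding W_def by blast
    have "ed x (replicate (8 * 10 ^ k) 0) = 2 * 10 ^ k" unfolding x ed_rep by simp
    then show "ereal (real (ed x (replicate (8 * 10 ^ k) 0)) / real (length x)) = ereal (1/3)"
      unfolding x by simp
  next
    fix y assume "y \<in> W 8"
    then obtain j where y: "y = replicate (8 * 10 ^ j) 0" unfolding W_def by auto
    have "2 * 10 ^ k \<le> ed x y"
    proof (cases j k rule: linorder_cases)
      case less
      then have "10 * 10 ^ j \<le> (10::nat) ^ k" using pw(2)[of j k] by simp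
      then show ?thesis unfolding x y ed_rep by (split if_split) linarith
    next
      case equal then show ?thesis unfolding x y ed_rep by auto
    next
      case greater
      then have "10 * 10 ^ k \<le> (10::nat) ^ j" using pw(2)[of k j] by simp
      then show ?thesis unfolding x y ed_rep by (split if_split) linarith
    qed
    then have "real (2 * 10 ^ k) \<le> real (ed x y)" by linarith
    then have "1/3 \<le> real (ed x y) / real (length x)" unfolding x by (simp add: field_simps)
    then show "ereal (1/3) \<le> ereal (real (ed x y) / real (length x))" by simp
  qed
qed

lemma YZ: "x \<in> W 8 \<Longrightarrow> (INF y\<in>W 1. ereal (real (ed x y) / real (length x))) = ereal (1/4)"
proof -
  assume "x \<in> W 8"
  then obtain k where x: "x = replicate (8 * 10 ^ k) 0" unfolding W_def by auto
  show ?thesis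
  proof (rule INF_eq[where yy = "replicate (1 * 10 ^ Suc k) 0"])
    show "replicate (1 * 10 ^ Suc k) 0 \<in> W 1" unfolding W_def by blast
    have "ed x (replicate (1 * 10 ^ Suc k) 0) = 2 * 10 ^ k" unfolding x ed_rep by simp
    then show "ereal (real (ed x (replicate (1 * 10 ^ Suc k) 0)) / real (length x)) = ereal (1/4)"
      unfolding x by simp
  next
    fix y assume "y \<in> W 1"
    then obtain j where y: "y = replicate (1 * 10 ^ j) 0" unfolding W_def by auto
    have "2 * 10 ^ k \<le> ed x y"
    proof (cases "j \<le> k")
      case True
      then have "(10::nat) ^ j \<le> 10 ^ k" by (rule pw(1))
      then show ?thesis unfolding x y ed_rep by (split if_split) linarith
    next
      case False
      then have "10 * (10::nat) ^ k \<le> 10 ^ j" by (intro pw(2)) auto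
      then show ?thesis unfolding x y ed_rep by (split if_split) linarith
    qed
    then have "real (2 * 10 ^ k) \<le> real (ed x y)" by linarith
    then have "1/4 \<le> real (ed x y) / real (length x)" unfolding x by (simp add: field_simps)
    then show "ereal (1/4) \<le> ereal (real (ed x y) / real (length x))" by simp
  qed
qed

theorem mainTheorem12:
  shows "\<exists>(\<Sigma>::nat set) (X::nat list set) Y Z.
           finite \<Sigma> \<and> X \<subseteq> lists \<Sigma> \<and> Y \<subseteq> lists \<Sigma> \<and> Z \<subseteq> lists \<Sigma> \<and>
           infinite X \<and> infinite Y \<and> infinite Z \<and>
           AC X Z > AC X Y + AC Y Z"
proof (intro exI conjI)
  show "finite {0::nat}" by simp
  show "W 6 \<subseteq> lists {0}" "W 8 \<subseteq> lists {0}" "W 1 \<subseteq> lists {0}" by (rule W_lists)+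
  show "infinite (W 6)" "infinite (W 8)" "infinite (W 1)" by (rule W_inf, simp)+
  have "AC (W 6) (W 1) = ereal (2/3)" by (rule AC_const, rule W_long, simp, erule XZ)
  moreover have "AC (W 6) (W 8) = ereal (1/3)" by (rule AC_const, rule W_long, simp, erule XY)
  moreover have "AC (W 8) (W 1) = ereal (1/4)" by (rule AC_const, rule W_long, simp, erule YZ)
  ultimately show "AC (W 6) (W 8) + AC (W 8) (W 1) < AC (W 6) (W 1)" by simp
qed

end
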